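(* Let $A$ be a homothetically shrinking soliton centered at $(x_0,t_0)$ such that $i_VF=0$ for some non-zero vector $V\in\mathbb R^n$. Then $A$ descends to the hyperplane perpendicular to $V$: in an exponential gauge (one with $(x-x_0)^jA_j(x)=0$), one has $V^jA_j\equiv0$ and $A_j(x+cV)=A_j(x)$ for all $x\in\mathbb R^n$, $c\in\mathbb R$ and all $j$, so that $A$ is a connection on a trivial $G$-vector bundle over the hyperplane $V^\perp$ pulled back along the orthogonal projection.
   Context: $G\subset SO(r)$ compact with Lie algebra $\mathfrak g$; $E$ the trivial $G$-vector bundle over $\mathbb R^n$. Connection $A=A_idx^i$, curvature $F_{ij}=\partial_iA_j-\partial_jA_i+[A_i,A_j]$; repeated indices summed; $\nabla_pT=\partial_pT+[A_p,T]$; $i_VF=V^pF_{pj}dx^j$. A homothetically shrinking soliton centered at $(x_0,t_0)$ satisfies $\nabla_pF_{pj}-\frac1{2t_0}(x-x_0)^pF_{pj}=0$ for all $j$. *)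

theory Defs
  imports "HOL-Analysis.Analysis"
begin

definition SO :: "(real^'r^'r) set" where
  "SO = {M. transpose M ** M = mat 1 \<and> det M = 1}"

definition compact_subgroup_SO :: "(real^'r^'r) set \<Rightarrow> bool" where
  "compact_subgroup_SO G \<longleftrightarrow> G \<subseteq> SO \<and> mat 1 \<in> G \<and>
     (\<forall>M\<in>G. \<forall>N\<in>G. M ** N \<in> G) \<and> (\<forall>M\<in>G. transpose M \<in> G) \<and> compact G"

primrec matpow :: "real^'r^'r \<Rightarrow> nat \<Rightarrow> real^'r^'r" where
  "matpow X 0 = mat 1"
| "matpow X (Suc k) = X ** matpow X k"

definition mexp :: "real^'r^'r \<Rightarrow> real^'r^'r" where
  "mexp X = (\<Sum>k. (1 / fact k) *\<^sub>R matpow X k)"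

definition lie_algebra :: "(real^'r^'r) set \<Rightarrow> (real^'r^'r) set" where
  "lie_algebra G = {X. \<forall>t::real. mexp (t *\<^sub>R X) \<in> G}"

definition bracket :: "real^'r^'r \<Rightarrow> real^'r^'r \<Rightarrow> real^'r^'r" where
  "bracket X Y = X ** Y - Y ** X"

definition pd :: "'n::finite \<Rightarrow> (real^'n \<Rightarrow> 'b::real_normed_vector) \<Rightarrow> real^'n \<Rightarrow> 'b" where
  "pd i f x = frechet_derivative f (at x) (axis i 1)"

fun iter_pd :: "'n::finite list \<Rightarrow> (real^'n \<Rightarrow> 'b::real_normed_vector) \<Rightarrow> real^'n \<Rightarrow> 'b" where
  "iter_pd [] f = f"
| "iter_pd (i # is) f = pd i (iter_pd is f)"

definition smooth_fun :: "(real^'n::finite \<Rightarrow> 'b::real_normed_vector) \<Rightarrow> bool" where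
  "smooth_fun f \<longleftrightarrow> (\<forall>is x. iter_pd is f differentiable (at x))"

definition curv :: "('n::finite \<Rightarrow> real^'n \<Rightarrow> real^'r^'r) \<Rightarrow> 'n \<Rightarrow> 'n \<Rightarrow> real^'n \<Rightarrow> real^'r^'r" where
  "curv A i j x = pd i (A j) x - pd j (A i) x + bracket (A i x) (A j x)"

definition cov_d :: "('n::finite \<Rightarrow> real^'n \<Rightarrow> real^'r^'r) \<Rightarrow> 'n \<Rightarrow> (real^'n \<Rightarrow> real^'r^'r) \<Rightarrow> real^'n \<Rightarrow> real^'r^'r" where
  "cov_d A p T x = pd p T x + bracket (A p x) (T x)"

definition shrinking_soliton :: "('n::finite \<Rightarrow> real^'n \<Rightarrow> real^'r^'r) \<Rightarrow> real^'n \<Rightarrow> real \<Rightarrow> bool" where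
  "shrinking_soliton A x0 t0 \<longleftrightarrow> t0 > 0 \<and>
     (\<forall>j x. (\<Sum>p\<in>UNIV. cov_d A p (curv A p j) x)
            - (1 / (2 * t0)) *\<^sub>R (\<Sum>p\<in>UNIV. (x - x0) $ p *\<^sub>R curv A p j x) = 0)"

definition interior_VF :: "('n::finite \<Rightarrow> real^'n \<Rightarrow> real^'r^'r) \<Rightarrow> real^'n \<Rightarrow> 'n \<Rightarrow> real^'n \<Rightarrow> real^'r^'r" where
  "interior_VF A V j x = (\<Sum>p\<in>UNIV. V $ p *\<^sub>R curv A p j x)"

definition exponential_gauge :: "('n::finite \<Rightarrow> real^'n \<Rightarrow> real^'r^'r) \<Rightarrow> real^'n \<Rightarrow> bool" where
  "exponential_gauge A x0 \<longleftrightarrow> (\<forall>x. (\<Sum>j\<in>UNIV. (x - x0) $ j *\<^sub>R A j x) = 0)"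

end

theory Submission
  imports Defs
begin

lemma bracket_lin_right: "linear (bracket X)"
  by (rule linearI) (auto simp: bracket_def vec_eq_iff matrix_matrix_mult_def sum.distrib
        algebra_simps sum_distrib_left)

lemma bracket_lin_left: "linear (\<lambda>X. bracket X Y)"
  by (rule linearI) (auto simp: bracket_def vec_eq_iff matrix_matrix_mult_def sum.distrib
        algebra_simps sum_distrib_left)

lemma lin_expand:
  fixes L :: "real^'n \<Rightarrow> 'b::real_vector"
  assumes "linear L"
  shows "L h = (\<Sum>k\<in>UNIV. h$k *\<^sub>R L (axis k 1))"
proof -
  have "L h = L (\<Sum>k\<in>UNIV. h$k *\<^sub>R axis k 1)"
    using basis_expansion[of h] by (simp add: scalar_mult_eq_scaleR)
  also have "\<dots> = (\<Sum>k\<in>UNIV. h$k *\<^sub>R L (axis k 1))"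
    by (simp add: linear_sum[OF assms] linear_scale[OF assms])
  finally show ?thesis .
qed

lemma deriv_of_zero:
  assumes "(g has_derivative g') (at z)" "\<And>x. g x = 0"
  shows "g' h = 0"
proof -
  have "g = (\<lambda>_. 0)" using assms(2) by auto
  then have "g' = (\<lambda>_. 0)" using assms(1) has_derivative_const has_derivative_unique by metis
  then show ?thesis by simp
qed

lemma sum_axis: fixes f :: "'n::finite \<Rightarrow> 'b::real_vector" shows "(\<Sum>j\<in>UNIV. axis k (1::real) $ j *\<^sub>R f j) = f k"
proof -
  have "(\<Sum>j\<in>UNIV. axis k (1::real) $ j *\<^sub>R f j) = (\<Sum>j\<in>UNIV. if k = j then f j else 0)"
    by (intro sum.cong) (auto simp: axis_def)
  then show ?thesis by simp
qed

theorem mainTheorem12: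
  fixes G :: "(real^'r^'r) set"
    and A :: "'n::finite \<Rightarrow> real^'n \<Rightarrow> real^'r^'r"
    and x0 V :: "real^'n" and t0 :: real
  assumes "compact_subgroup_SO G"
    and "\<forall>i x. A i x \<in> lie_algebra G"
    and "\<forall>i. smooth_fun (A i)"
    and "shrinking_soliton A x0 t0"
    and "V \<noteq> 0"
    and "\<forall>j x. interior_VF A V j x = 0"
    and "exponential_gauge A x0"
  shows "(\<forall>x. (\<Sum>j\<in>UNIV. V $ j *\<^sub>R A j x) = 0) \<and>
         (\<forall>x c j. A j (x + c *\<^sub>R V) = A j x)"
proof -
  define D where "D k z = frechet_derivative (A k) (at z)" for k z
  have dA: "(A k has_derivative D k z) (at z)" for k z
  proof -
    have "iter_pd [] (A k) differentiable (at z)" using assms(3) unfolding smooth_fun_def by blast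
    then show ?thesis unfolding D_def by (simp add: frechet_derivative_works)
  qed
  have linD: "linear (D k z)" for k z using dA has_derivative_linear by blast
  have pdD: "pd k (A j) z = D j z (axis k 1)" for k j z by (simp add: pd_def D_def)
  have gauge: "(\<Sum>j\<in>UNIV. (x - x0) $ j *\<^sub>R A j x) = 0" for x
    using assms(7) by (simp add: exponential_gauge_def)
  have ivf: "(\<Sum>p\<in>UNIV. V $ p *\<^sub>R curv A p j x) = 0" for j x
    using assms(6) by (simp add: interior_VF_def)
  have vn: "((\<lambda>x. (x - x0) $ j) has_derivative (\<lambda>h. h $ j)) (at z)" for j z
  proof -
    have "((\<lambda>x. x $ j) has_derivative (\<lambda>h. h $ j)) (at z)"
      using bounded_linear_imp_has_derivative[OF bounded_linear_vec_nth] by blast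
    from has_derivative_diff[OF this has_derivative_const[of "x0 $ j"]]
    show ?thesis by simp
  qed
  have line: "((\<lambda>t. x + t *\<^sub>R y) has_derivative (\<lambda>h. h *\<^sub>R y)) (at t)" for x y :: "real^'n" and t :: real
    using has_derivative_add[OF has_derivative_const[of x] has_derivative_scaleR_left[OF has_derivative_ident, of y]]
    by simp
  have dS: "((\<lambda>t. \<Sum>k\<in>UNIV. V $ k *\<^sub>R A k (x + t *\<^sub>R y)) has_derivative
      (\<lambda>h. \<Sum>k\<in>UNIV. V $ k *\<^sub>R D k (x + t *\<^sub>R y) (h *\<^sub>R y))) (at t)" for x y :: "real^'n" and t :: real
    by (rule has_derivative_sum, rule has_derivative_scaleR_right, rule has_derivative_compose[OF line dA])
  have E: "A k z + (\<Sum>j\<in>UNIV. (z - x0)$j *\<^sub>R pd k (A j) z) = 0" for k z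
  proof -
    have "((\<lambda>x. \<Sum>j\<in>UNIV. (x - x0) $ j *\<^sub>R A j x) has_derivative
       (\<lambda>h. \<Sum>j\<in>UNIV. (z - x0) $ j *\<^sub>R D j z h + h $ j *\<^sub>R A j z)) (at z)"
      by (rule has_derivative_sum, rule has_derivative_scaleR[OF vn dA])
    from deriv_of_zero[OF this gauge, of "axis k 1"]
    show ?thesis by (simp add: sum.distrib sum_axis pdD add.commute)
  qed
  define S where "S z = (\<Sum>k\<in>UNIV. V $ k *\<^sub>R A k z)" for z
  have perp: "(\<Sum>j\<in>UNIV. w$j *\<^sub>R curv A p j z) = - A p z - D p z w" if "w = z - x0" for w p z
  proof -
    have "(\<Sum>j\<in>UNIV. w$j *\<^sub>R curv A p j z) =
      (\<Sum>j\<in>UNIV. w$j *\<^sub>R pd p (A j) z) - (\<Sum>j\<in>UNIV. w$j *\<^sub>R pd j (A p) z)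
       + (\<Sum>j\<in>UNIV. w$j *\<^sub>R bracket (A p z) (A j z))"
      by (simp add: curv_def algebra_simps sum.distrib sum_subtractf)
    also have "(\<Sum>j\<in>UNIV. w$j *\<^sub>R pd p (A j) z) = - A p z"
      using E[of p z] that by (simp add: eq_neg_iff_add_eq_0 add.commute)
    also have "(\<Sum>j\<in>UNIV. w$j *\<^sub>R pd j (A p) z) = D p z w"
      using lin_expand[OF linD, of p z w] by (simp add: pdD)
    also have "(\<Sum>j\<in>UNIV. w$j *\<^sub>R bracket (A p z) (A j z)) = bracket (A p z) (\<Sum>j\<in>UNIV. w$j *\<^sub>R A j z)"
      by (simp add: linear_sum[OF bracket_lin_right] linear_scale[OF bracket_lin_right])
    also have "\<dots> = 0" using gauge[of z] that by (simp add: linear_0[OF bracket_lin_right])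
    finally show ?thesis by simp
  qed
  have K: "S z + (\<Sum>k\<in>UNIV. V$k *\<^sub>R D k z (z - x0)) = 0" for z
  proof -
    have "0 = (\<Sum>j\<in>UNIV. (z - x0)$j *\<^sub>R (\<Sum>p\<in>UNIV. V $ p *\<^sub>R curv A p j z))"
      by (simp add: ivf)
    also have "\<dots> = (\<Sum>j\<in>UNIV. \<Sum>p\<in>UNIV. V $ p *\<^sub>R ((z - x0)$j *\<^sub>R curv A p j z))"
      by (intro sum.cong refl) (simp add: scaleR_sum_right mult.commute)
    also have "\<dots> = (\<Sum>p\<in>UNIV. \<Sum>j\<in>UNIV. V $ p *\<^sub>R ((z - x0)$j *\<^sub>R curv A p j z))"
      by (rule sum.swap)
    also have "\<dots> = (\<Sum>p\<in>UNIV. V $ p *\<^sub>R (\<Sum>j\<in>UNIV. (z - x0)$j *\<^sub>R curv A p j z))"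
      by (simp add: scaleR_sum_right)
    also have "\<dots> = (\<Sum>p\<in>UNIV. V $ p *\<^sub>R (- A p z - D p z (z - x0)))"
      by (intro sum.cong refl) (simp only: perp[OF refl])
    also have "\<dots> = - (S z + (\<Sum>k\<in>UNIV. V$k *\<^sub>R D k z (z - x0)))"
      by (simp add: S_def algebra_simps sum.distrib sum_subtractf sum_negf)
    finally show ?thesis by (metis neg_equal_0_iff_equal)
  qed
  have part1: "S x = 0" for x
  proof -
    define y where "y = x - x0"
    define phi where "phi t = t *\<^sub>R S (x0 + t *\<^sub>R y)" for t :: real
    have "(phi has_derivative (\<lambda>h. 0)) (at t within UNIV)" for t
    proof -
      let ?z = "x0 + t *\<^sub>R y"
      have "(phi has_derivative (\<lambda>h. t *\<^sub>R (\<Sum>k\<in>UNIV. V $ k *\<^sub>R D k ?z (h *\<^sub>R y)) + h *\<^sub>R S ?z)) (at t)"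
        unfolding phi_def S_def by (rule has_derivative_scaleR[OF has_derivative_ident dS])
      moreover have "(\<lambda>h. t *\<^sub>R (\<Sum>k\<in>UNIV. V $ k *\<^sub>R D k ?z (h *\<^sub>R y)) + h *\<^sub>R S ?z) = (\<lambda>h. 0)"
      proof
        fix h
        have "t *\<^sub>R (\<Sum>k\<in>UNIV. V $ k *\<^sub>R D k ?z (h *\<^sub>R y)) = h *\<^sub>R (\<Sum>k\<in>UNIV. V $ k *\<^sub>R D k ?z (?z - x0))"
          by (simp add: linear_scale[OF linD] scaleR_sum_right y_def mult_ac)
        then show "t *\<^sub>R (\<Sum>k\<in>UNIV. V $ k *\<^sub>R D k ?z (h *\<^sub>R y)) + h *\<^sub>R S ?z = 0"
          using K[of ?z] by (simp add: scaleR_right_distrib[symmetric] add.commute)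
      qed
      ultimately show ?thesis by simp
    qed
    from has_derivative_zero_constant[of UNIV phi, OF convex_UNIV this]
    obtain c where "\<And>t. phi t = c" by auto
    then have "phi 1 = phi 0" by metis
    then show ?thesis by (simp add: phi_def y_def)
  qed
  have DV: "D j z V = 0" for j z
  proof -
    have "(S has_derivative (\<lambda>h. \<Sum>k\<in>UNIV. V $ k *\<^sub>R D k z h)) (at z)"
      unfolding S_def by (rule has_derivative_sum, rule has_derivative_scaleR_right, rule dA)
    from deriv_of_zero[OF this part1, of "axis j 1"]
    have z2: "(\<Sum>k\<in>UNIV. V $ k *\<^sub>R pd j (A k) z) = 0" by (simp add: pdD)
    have "0 = (\<Sum>k\<in>UNIV. V $ k *\<^sub>R curv A k j z)" using ivf by simp
    also have "\<dots> = (\<Sum>k\<in>UNIV. V $ k *\<^sub>R pd k (A j) z) - (\<Sum>k\<in>UNIV. V $ k *\<^sub>R pd j (A k) z)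
       + (\<Sum>k\<in>UNIV. V $ k *\<^sub>R bracket (A k z) (A j z))"
      by (simp add: curv_def algebra_simps sum.distrib sum_subtractf)
    also have "(\<Sum>k\<in>UNIV. V $ k *\<^sub>R bracket (A k z) (A j z)) = bracket (S z) (A j z)"
      unfolding S_def
      by (simp add: linear_sum[OF bracket_lin_left] linear_scale[OF bracket_lin_left])
    also have "\<dots> = 0" using part1[of z] by (simp add: linear_0[OF bracket_lin_left])
    also have "(\<Sum>k\<in>UNIV. V $ k *\<^sub>R pd k (A j) z) = D j z V"
      using lin_expand[OF linD, of j z V] by (simp add: pdD)
    finally show ?thesis using z2 by simp
  qed
  have part2: "A j (x + c *\<^sub>R V) = A j x" for x c j
  proof -
    define psi where "psi s = A j (x + s *\<^sub>R V)" for s :: real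
    have "(psi has_derivative (\<lambda>h. 0)) (at s within UNIV)" for s
    proof -
      have "(psi has_derivative (\<lambda>h. D j (x + s *\<^sub>R V) (h *\<^sub>R V))) (at s)"
        unfolding psi_def by (rule has_derivative_compose[OF line dA])
      moreover have "(\<lambda>h. D j (x + s *\<^sub>R V) (h *\<^sub>R V)) = (\<lambda>h. 0)"
        by (simp add: linear_scale[OF linD] DV)
      ultimately show ?thesis by simp
    qed
    from has_derivative_zero_constant[of UNIV psi, OF convex_UNIV this]
    obtain d where "\<And>t. psi t = d" by auto
    then have "psi c = psi 0" by metis
    then show ?thesis by (simp add: psi_def)
  qed
  show ?thesis using part1 part2 by (simp add: S_def)
qed

end
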